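(* For every Epstein model $\mathfrak{M}$, with $\Theta=\mathsf{Th}(\mathfrak{M})$, we have $\mathsf{S}^{\Theta}=\{\mathfrak{N}\in\mathsf{M}:\mathsf{Th}(\mathfrak{N})=\Theta\}$, where $\mathsf{S}^{\Theta}=\{\langle v',\mathfrak{R}'\rangle: v'=v^{\Theta}\text{ and }\mathfrak{R}^{\Theta}_{\min}\subseteq\mathfrak{R}'\subseteq\mathfrak{R}^{\Theta}_{\max}\}$, $\mathfrak{R}^{\Theta}_{\min}=\{\langle\varphi,\psi\rangle:\varphi\looparrowright\psi\in\Theta\}$, $\mathfrak{R}^{\Theta}_{\max}=\{\langle\varphi,\psi\rangle:\varphi\looparrowright\psi\in\Theta\text{ or }\varphi\to\psi\notin\Theta\}$, and $v^{\Theta}:\Phi\to\{0,1\}$ is given by $v^{\Theta}(p)=1$ iff $p\in\Theta$.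
   Context: Language: propositional letters $\Phi=\{p_0,p_1,\dots\}$; connectives $\neg$, $\lor,\wedge,\to,\leftrightarrow,\vartriangle,\looparrowright$; $\mathsf{FOR}$ the set of all formulas. An Epstein model is $\langle v,\mathfrak{R}\rangle$ with $v:\Phi\to\{0,1\}$ and $\mathfrak{R}\subseteq\mathsf{FOR}^2$; $\mathsf{M}$ is the set of all Epstein models. Truth: letters via $v$, boolean connectives classical, $\langle v,\mathfrak{R}\rangle\vDash\varphi\vartriangle\psi$ iff both true and $\langle\varphi,\psi\rangle\in\mathfrak{R}$; $\langle v,\mathfrak{R}\rangle\vDash\varphi\looparrowright\psi$ iff $\varphi\to\psi$ true and $\langle\varphi,\psi\rangle\in\mathfrak{R}$. $\mathsf{Th}(\mathfrak{M})=\{\varphi\in\mathsf{FOR}:\mathfrak{M}\vDash\varphi\}$. *)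

theory Defs
  imports Main
begin

datatype form =
    Var nat
  | Neg form
  | Disj form form
  | Conj form form
  | Imp form form
  | Iff form form
  | RelConj form form
  | RelImp form form    (* looparrowright *)

type_synonym emodel = "(nat \<Rightarrow> bool) \<times> (form \<times> form) set"

fun sat :: "emodel \<Rightarrow> form \<Rightarrow> bool" where
  "sat M (Var p) = fst M p"
| "sat M (Neg a) = (\<not> sat M a)"
| "sat M (Disj a b) = (sat M a \<or> sat M b)"
| "sat M (Conj a b) = (sat M a \<and> sat M b)"
| "sat M (Imp a b) = (sat M a \<longrightarrow> sat M b)"
| "sat M (Iff a b) = (sat M a \<longleftrightarrow> sat M b)"
| "sat M (RelConj a b) = (sat M a \<and> sat M b \<and> (a, b) \<in> snd M)"
| "sat M (RelImp a b) = ((sat M a \<longrightarrow> sat M b) \<and> (a, b) \<in> snd M)"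

definition Th :: "emodel \<Rightarrow> form set" where
  "Th M = {\<phi>. sat M \<phi>}"

definition Rmin :: "form set \<Rightarrow> (form \<times> form) set" where
  "Rmin \<Theta> = {(\<phi>, \<psi>). RelImp \<phi> \<psi> \<in> \<Theta>}"

definition Rmax :: "form set \<Rightarrow> (form \<times> form) set" where
  "Rmax \<Theta> = {(\<phi>, \<psi>). RelImp \<phi> \<psi> \<in> \<Theta> \<or> Imp \<phi> \<psi> \<notin> \<Theta>}"

definition vTheta :: "form set \<Rightarrow> nat \<Rightarrow> bool" where
  "vTheta \<Theta> p = (Var p \<in> \<Theta>)"

definition STheta :: "form set \<Rightarrow> emodel set" where
  "STheta \<Theta> = {(v', R'). v' = vTheta \<Theta> \<and> Rmin \<Theta> \<subseteq> R' \<and> R' \<subseteq> Rmax \<Theta>}"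

end

theory Submission
  imports Defs
begin

lemma sat_eq:
  assumes "fst N = vTheta (Th M)" "Rmin (Th M) \<subseteq> snd N" "snd N \<subseteq> Rmax (Th M)"
  shows "sat N \<phi> = sat M \<phi>"
proof (induction \<phi>)
  case (RelConj a b)
  then show ?case using assms(2,3)
    by (auto simp: Rmin_def Rmax_def Th_def)
next
  case (RelImp a b)
  then show ?case using assms(2,3)
    by (auto simp: Rmin_def Rmax_def Th_def)
qed (use assms in \<open>auto simp: vTheta_def Th_def\<close>)

theorem mainTheorem14:
  fixes M :: emodel
  shows "STheta (Th M) = {N. Th N = Th M}"
proof
  show "STheta (Th M) \<subseteq> {N. Th N = Th M}"
  proof
    fix N assume "N \<in> STheta (Th M)"
    then have "fst N = vTheta (Th M)" "Rmin (Th M) \<subseteq> snd N" "snd N \<subseteq> Rmax (Th M)"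
      by (cases N, simp add: STheta_def)+
    then have "\<And>\<phi>. sat N \<phi> = sat M \<phi>" by (rule sat_eq)
    then show "N \<in> {N. Th N = Th M}" unfolding Th_def by (simp add: set_eq_iff)
  qed
next
  show "{N. Th N = Th M} \<subseteq> STheta (Th M)"
  proof
    fix N assume "N \<in> {N. Th N = Th M}"
    then have h: "\<And>\<phi>. sat N \<phi> = sat M \<phi>" unfolding Th_def by (simp add: set_eq_iff)
    obtain v R where N: "N = (v, R)" by (cases N)
    have "v = vTheta (Th M)"
    proof
      fix p show "v p = vTheta (Th M) p" using h[of "Var p"] by (simp add: N vTheta_def Th_def)
    qed
    moreover have "Rmin (Th M) \<subseteq> R"
    proof
      fix x assume "x \<in> Rmin (Th M)"
      then obtain a b where x: "x = (a,b)" "sat M (RelImp a b)" by (auto simp: Rmin_def Th_def)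
      then show "x \<in> R" using h[of "RelImp a b"] by (simp add: N)
    qed
    moreover have "R \<subseteq> Rmax (Th M)"
    proof
      fix x assume x: "x \<in> R"
      obtain a b where x2: "x = (a, b)" by (cases x)
      have "sat M (RelImp a b) \<or> \<not> sat M (Imp a b)"
        using h[of "RelImp a b"] h[of "Imp a b"] x x2 by (simp add: N)
      then show "x \<in> Rmax (Th M)" by (simp add: x2 Rmax_def Th_def)
    qed
    ultimately show "N \<in> STheta (Th M)" by (auto simp: N STheta_def)
  qed
qed

end
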